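(* Let $(X,T)$ be a minimal Cantor system with a sequence of CKR partitions satisfying (KR1)–(KR6), and let $\lambda=\exp(2i\pi\alpha)$ with $\alpha\in\mathbb R$. Then $\lambda$ is a continuous eigenvalue of $(X,T)$ if and only if $(\lambda^{r_n(x)})_{n\ge1}$ converges uniformly in $x\in X$ (equivalently, $(\alpha r_n(x))_{n\ge1}$ converges modulo $\mathbb Z$ uniformly in $x$).
   Context: CKR partitions $\mathcal P(n)=\{T^{-j}B_k(n):1\le k\le C(n),0\le j<h_k(n)\}$ (partitions of $X$, $B_k(n)$ clopen) with $\mathcal P(0)$ trivial, roof $B(n)=\bigcup_kB_k(n)$. (KR1) $B(n+1)\subseteq B(n)$; (KR2) $\mathcal P(n+1)$ refines $\mathcal P(n)$; (KR3) $\bigcap_nB(n)$ is a single point; (KR4) the partitions generate the topology; (KR5) for all $n\ge1$, $k\le C(n-1)$, $l\le C(n)$ some $0\le j<h_l(n)$ has $T^{-j}B_l(n)\subseteq B_k(n-1)$; (KR6) $B(n)\subseteq B_1(n-1)$ for $n\ge1$. $r_n(x)=\min\{j\ge0:T^jx\in B(n)\}$. A continuous eigenvalue is $\lambda$ with $f\circ T=\lambda f$ for some continuous nonzero $f:X\to\mathbb C$. *)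

theory Defs
  imports "HOL-Analysis.Analysis"
begin

definition cantor_space :: "'a::metric_space set \<Rightarrow> bool" where
  "cantor_space X \<longleftrightarrow> X \<noteq> {} \<and> compact X \<and> (\<forall>x\<in>X. x islimpt X)
     \<and> (\<forall>x\<in>X. connected_component_set X x = {x})"

definition self_homeo :: "'a::metric_space set \<Rightarrow> ('a \<Rightarrow> 'a) \<Rightarrow> bool" where
  "self_homeo X T \<longleftrightarrow> homeomorphism X X T (inv_into X T)"

definition minimal_system :: "'a::metric_space set \<Rightarrow> ('a \<Rightarrow> 'a) \<Rightarrow> bool" where
  "minimal_system X T \<longleftrightarrow>
     (\<forall>Y. Y \<subseteq> X \<and> closed Y \<and> Y \<noteq> {} \<and> T ` Y = Y \<longrightarrow> Y = X)"

definition minimal_cantor_system :: "'a::metric_space set \<Rightarrow> ('a \<Rightarrow> 'a) \<Rightarrow> bool" where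
  "minimal_cantor_system X T \<longleftrightarrow> cantor_space X \<and> self_homeo X T \<and> minimal_system X T"

definition preim_pow :: "'a set \<Rightarrow> ('a \<Rightarrow> 'a) \<Rightarrow> nat \<Rightarrow> 'a set \<Rightarrow> 'a set" where
  "preim_pow X T j A = {x \<in> X. (T ^^ j) x \<in> A}"

definition ckr_index :: "(nat \<Rightarrow> nat) \<Rightarrow> (nat \<Rightarrow> nat \<Rightarrow> nat) \<Rightarrow> nat \<Rightarrow> (nat \<times> nat) set" where
  "ckr_index C h n = {(k, j). 1 \<le> k \<and> k \<le> C n \<and> j < h n k}"

text \<open>Atom $T^{-j}B_k(n)$; here \<open>B n k\<close> stands for $B_k(n)$ and \<open>h n k\<close> for $h_k(n)$.\<close>
definition ckr_atom :: "'a set \<Rightarrow> ('a \<Rightarrow> 'a) \<Rightarrow> (nat \<Rightarrow> nat \<Rightarrow> 'a set) \<Rightarrow> nat \<Rightarrow> nat \<times> nat \<Rightarrow> 'a set" where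
  "ckr_atom X T B n kj = preim_pow X T (snd kj) (B n (fst kj))"

definition ckr_roof :: "(nat \<Rightarrow> nat) \<Rightarrow> (nat \<Rightarrow> nat \<Rightarrow> 'a set) \<Rightarrow> nat \<Rightarrow> 'a set" where
  "ckr_roof C B n = (\<Union>k\<in>{1..C n}. B n k)"

definition ckr_partition ::
  "'a::metric_space set \<Rightarrow> ('a \<Rightarrow> 'a) \<Rightarrow> (nat \<Rightarrow> nat) \<Rightarrow> (nat \<Rightarrow> nat \<Rightarrow> nat) \<Rightarrow> (nat \<Rightarrow> nat \<Rightarrow> 'a set) \<Rightarrow> nat \<Rightarrow> bool" where
  "ckr_partition X T C h B n \<longleftrightarrow>
     1 \<le> C n \<and>
     (\<forall>k\<in>{1..C n}. B n k \<subseteq> X \<and> B n k \<noteq> {} \<and> openin (top_of_set X) (B n k)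
        \<and> closedin (top_of_set X) (B n k) \<and> 1 \<le> h n k) \<and>
     (\<forall>p\<in>ckr_index C h n. \<forall>q\<in>ckr_index C h n. p \<noteq> q \<longrightarrow> ckr_atom X T B n p \<inter> ckr_atom X T B n q = {}) \<and>
     (\<Union>p\<in>ckr_index C h n. ckr_atom X T B n p) = X"

definition ckr_sequence ::
  "'a::metric_space set \<Rightarrow> ('a \<Rightarrow> 'a) \<Rightarrow> (nat \<Rightarrow> nat) \<Rightarrow> (nat \<Rightarrow> nat \<Rightarrow> nat) \<Rightarrow> (nat \<Rightarrow> nat \<Rightarrow> 'a set) \<Rightarrow> bool" where
  "ckr_sequence X T C h B \<longleftrightarrow>
     (\<forall>n. ckr_partition X T C h B n) \<and>
     \<comment> \<open>P(0) trivial\<close>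
     C 0 = 1 \<and> h 0 1 = 1 \<and> B 0 1 = X \<and>
     \<comment> \<open>(KR1)\<close>
     (\<forall>n. ckr_roof C B (Suc n) \<subseteq> ckr_roof C B n) \<and>
     \<comment> \<open>(KR2)\<close>
     (\<forall>n. \<forall>p\<in>ckr_index C h (Suc n). \<exists>q\<in>ckr_index C h n.
          ckr_atom X T B (Suc n) p \<subseteq> ckr_atom X T B n q) \<and>
     \<comment> \<open>(KR3)\<close>
     (\<exists>x. (\<Inter>n. ckr_roof C B n) = {x}) \<and>
     \<comment> \<open>(KR4): the atoms form a basis of the topology of X\<close>
     (\<forall>U x. openin (top_of_set X) U \<and> x \<in> U \<longrightarrow>
        (\<exists>n. \<exists>p\<in>ckr_index C h n. x \<in> ckr_atom X T B n p \<and> ckr_atom X T B n p \<subseteq> U)) \<and>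
     \<comment> \<open>(KR5)\<close>
     (\<forall>n\<ge>1. \<forall>k\<in>{1..C (n-1)}. \<forall>l\<in>{1..C n}. \<exists>j<h n l.
          preim_pow X T j (B n l) \<subseteq> B (n-1) k) \<and>
     \<comment> \<open>(KR6)\<close>
     (\<forall>n\<ge>1. ckr_roof C B n \<subseteq> B (n-1) 1)"

definition ckr_return :: "('a \<Rightarrow> 'a) \<Rightarrow> (nat \<Rightarrow> nat) \<Rightarrow> (nat \<Rightarrow> nat \<Rightarrow> 'a set) \<Rightarrow> nat \<Rightarrow> 'a \<Rightarrow> nat" where
  "ckr_return T C B n x = (LEAST j. (T ^^ j) x \<in> ckr_roof C B n)"

definition continuous_eigenvalue :: "'a::metric_space set \<Rightarrow> ('a \<Rightarrow> 'a) \<Rightarrow> complex \<Rightarrow> bool" where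
  "continuous_eigenvalue X T lam \<longleftrightarrow>
     (\<exists>f :: 'a \<Rightarrow> complex. continuous_on X f \<and> (\<exists>x\<in>X. f x \<noteq> 0) \<and>
        (\<forall>x\<in>X. f (T x) = lam * f x))"

definition dist_Z :: "real \<Rightarrow> real" where
  "dist_Z t = \<bar>t - round t\<bar>"

definition unif_conv_mod_Z :: "'a set \<Rightarrow> (nat \<Rightarrow> 'a \<Rightarrow> real) \<Rightarrow> bool" where
  "unif_conv_mod_Z X g \<longleftrightarrow>
     (\<exists>l. \<forall>e>0. \<exists>N. \<forall>n\<ge>N. \<forall>x\<in>X. dist_Z (g n x - l x) < e)"

end

theory Submission
  imports Defs
begin


lemma E_cis: "exp (2 * complex_of_real pi * \<i> * complex_of_real t) = cis (2*pi*t)"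
  by (simp add: cis_conv_exp mult_ac)

lemma distZ_le: "dist_Z t \<le> 1/2" "0 \<le> dist_Z t"
  using of_int_round_ge[of t] of_int_round_le[of t] unfolding dist_Z_def by (auto simp: abs_if)

lemma norm_cis_minus1: "norm (cis a - 1) = 2 * \<bar>sin (a/2)\<bar>"
proof -
  have "(norm (cis a - 1))^2 = (cos a - 1)^2 + (sin a)^2"
    by (simp add: cmod_power2)
  also have "\<dots> = 2 - 2 * cos a" by (simp add: power2_eq_square algebra_simps sin_squared_eq)
  also have "cos a = 1 - 2 * sin (a/2)^2" using cos_double_sin[of "a/2"] by simp
  also have "2 - 2 * (1 - 2 * sin (a/2)^2) = (2 * \<bar>sin (a/2)\<bar>)^2" by (simp add: power2_eq_square)
  finally show ?thesis
    by (metis abs_of_nonneg norm_ge_zero power2_eq_imp_eq abs_ge_zero mult_nonneg_nonneg zero_le_numeral)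
qed

lemma cis_round: "cis (2*pi*t) = cis (2*pi*(t - round t))"
proof -
  have "cis (2*pi*t) = cis (2*pi*(t - round t)) * cis (2*pi * of_int (round t))"
    by (simp add: cis_mult algebra_simps)
  also have "cis (2*pi * of_int (round t)) = 1" by (rule cis_multiple_2pi) simp
  finally show ?thesis by simp
qed

lemma norm_E_distZ: "norm (cis (2*pi*t) - 1) = 2 * sin (pi * dist_Z t)"
proof -
  define d where "d = t - round t"
  have "norm (cis (2*pi*t) - 1) = 2 * \<bar>sin (pi * d)\<bar>"
    using cis_round[of t] norm_cis_minus1[of "2*pi*d"] by (simp add: d_def)
  also have "\<bar>sin (pi * d)\<bar> = sin (pi * \<bar>d\<bar>)"
  proof (cases "d \<ge> 0")
    case True
    have "\<bar>d\<bar> \<le> 1/2" using distZ_le[of t] by (simp add: dist_Z_def d_def)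
    hence "0 \<le> sin (pi * d)" using True by (intro sin_ge_zero) auto
    thus ?thesis using True by simp
  next
    case False
    have "\<bar>d\<bar> \<le> 1/2" using distZ_le[of t] by (simp add: dist_Z_def d_def)
    hence "pi * (-d) \<le> pi * 1" by (intro mult_left_mono) auto
    moreover have "0 \<le> pi * (-d)" by (intro mult_nonneg_nonneg) (use False in auto)
    ultimately have "0 \<le> sin (pi * (-d))" by (intro sin_ge_zero) auto
    thus ?thesis using False by (simp add: sin_minus)
  qed
  finally show ?thesis by (simp add: dist_Z_def d_def)
qed

lemma dist_cis: "dist (cis a) (cis b) = norm (cis (a - b) - 1)"
proof -
  have "cis a - cis b = cis b * (cis (a - b) - 1)" by (simp add: algebra_simps cis_mult)
  thus ?thesis by (simp add: dist_norm norm_mult)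
qed

lemma upper_bound: "norm (cis (2*pi*t) - 1) \<le> 2 * pi * dist_Z t"
  using norm_E_distZ[of t] sin_x_le_x[of "pi * dist_Z t"] distZ_le[of t] by simp

lemma lower_bound:
  assumes "0 < e" "e \<le> 1/2" "dist_Z t \<ge> e"
  shows "2 * sin (pi * e) \<le> norm (cis (2*pi*t) - 1)"
proof -
  have "sin (pi * e) \<le> sin (pi * dist_Z t)"
    using assms distZ_le[of t] pi_gt_zero
    by (subst sin_mono_le_eq) (auto simp: field_simps intro: mult_pos_pos mult_nonneg_nonneg order.trans[of "-pi" 0])
  thus ?thesis using norm_E_distZ[of t] by simp
qed

lemma partC:
  fixes X :: "'a set" and r :: "nat \<Rightarrow> 'a \<Rightarrow> nat"
  assumes lam: "lam = exp (2 * complex_of_real pi * \<i> * complex_of_real \<alpha>)"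
  shows "uniformly_convergent_on X (\<lambda>n x. lam ^ r n x) \<longleftrightarrow>
           unif_conv_mod_Z X (\<lambda>n x. \<alpha> * real (r n x))"
proof -
  have l1: "lam = cis (2*pi*\<alpha>)" using lam E_cis by simp
  have lp: "lam ^ k = cis (2*pi*(\<alpha> * real k))" for k
  proof -
    have "lam ^ k = cis (2*pi*\<alpha>) ^ k" using l1 by simp
    also have "\<dots> = cis (real k * (2*pi*\<alpha>))" by (rule Complex.DeMoivre)
    finally show ?thesis by (simp add: mult_ac)
  qed
  show ?thesis
  proof
    assume "uniformly_convergent_on X (\<lambda>n x. lam ^ r n x)"
    then obtain l where ul: "\<forall>e>0. \<forall>\<^sub>F n in sequentially. \<forall>x\<in>X. dist (lam ^ r n x) (l x) < e"
      unfolding uniformly_convergent_on_def uniform_limit_iff by blast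
    have nl: "norm (l x) = 1" if x: "x \<in> X" for x
    proof -
      have "((\<lambda>n. lam ^ r n x) \<longlongrightarrow> l x) sequentially"
        unfolding tendsto_iff
      proof (intro allI impI)
        fix e :: real assume "e > 0"
        from ul[rule_format, OF this] show "\<forall>\<^sub>F n in sequentially. dist (lam ^ r n x) (l x) < e"
          by (rule eventually_mono) (use x in auto)
      qed
      hence "((\<lambda>n. norm (lam ^ r n x)) \<longlongrightarrow> norm (l x)) sequentially" by (rule tendsto_norm)
      moreover have "(\<lambda>n. norm (lam ^ r n x)) = (\<lambda>n. 1)" by (simp add: lp)
      ultimately show ?thesis using LIMSEQ_unique tendsto_const by metis
    qed
    define \<beta> where "\<beta> x = Arg (l x) / (2*pi)" for x
    have lb: "l x = cis (2*pi*\<beta> x)" if "x \<in> X" for x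
    proof -
      have "l x \<noteq> 0" using nl[OF that] by auto
      thus ?thesis using nl[OF that] cis_Arg[of "l x"] by (auto simp: \<beta>_def sgn_div_norm)
    qed
    show "unif_conv_mod_Z X (\<lambda>n x. \<alpha> * real (r n x))"
      unfolding unif_conv_mod_Z_def
    proof (intro exI[of _ \<beta>] allI impI)
      fix e :: real assume "e > 0"
      define e' where "e' = min e (1/2)"
      have e': "0 < e'" "e' \<le> 1/2" "e' \<le> e" using \<open>e>0\<close> by (auto simp: e'_def)
      have "0 < sin (pi * e')" using e' by (intro sin_gt_zero) auto
      hence "0 < 2 * sin (pi * e')" by simp
      from ul[rule_format, OF this] obtain N where
        N: "\<forall>n\<ge>N. \<forall>x\<in>X. dist (lam ^ r n x) (l x) < 2 * sin (pi * e')"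
        unfolding eventually_sequentially by blast
      show "\<exists>N. \<forall>n\<ge>N. \<forall>x\<in>X. dist_Z (\<alpha> * real (r n x) - \<beta> x) < e"
      proof (intro exI allI impI ballI)
        fix n x assume "N \<le> n" "x \<in> X"
        have eq: "dist (lam ^ r n x) (l x) = norm (cis (2*pi*(\<alpha> * real (r n x) - \<beta> x)) - 1)"
          using lb[OF \<open>x\<in>X\<close>] by (simp add: lp dist_cis algebra_simps)
        have "dist (lam ^ r n x) (l x) < 2 * sin (pi * e')"
          using N \<open>N \<le> n\<close> \<open>x \<in> X\<close> by blast
        hence lt: "norm (cis (2*pi*(\<alpha> * real (r n x) - \<beta> x)) - 1) < 2 * sin (pi * e')"
          by (simp only: eq)
        show "dist_Z (\<alpha> * real (r n x) - \<beta> x) < e"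
        proof (rule ccontr)
          assume "\<not> ?thesis"
          hence "dist_Z (\<alpha> * real (r n x) - \<beta> x) \<ge> e'" using e' by simp
          from lower_bound[OF e'(1,2) this] lt show False by simp
        qed
      qed
    qed
  next
    assume "unif_conv_mod_Z X (\<lambda>n x. \<alpha> * real (r n x))"
    then obtain l where ul: "\<forall>e>0. \<exists>N. \<forall>n\<ge>N. \<forall>x\<in>X. dist_Z (\<alpha> * real (r n x) - l x) < e"
      unfolding unif_conv_mod_Z_def by blast
    show "uniformly_convergent_on X (\<lambda>n x. lam ^ r n x)"
      unfolding uniformly_convergent_on_def uniform_limit_iff
    proof (intro exI[of _ "\<lambda>x. cis (2*pi*l x)"] allI impI)
      fix e :: real assume "e > 0"
      hence "e / (2*pi) > 0" by simp
      from ul[rule_format, OF this] obtain N where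
        N: "\<forall>n\<ge>N. \<forall>x\<in>X. dist_Z (\<alpha> * real (r n x) - l x) < e / (2*pi)" by blast
      show "\<forall>\<^sub>F n in sequentially. \<forall>x\<in>X. dist (lam ^ r n x) (cis (2*pi*l x)) < e"
        unfolding eventually_sequentially
      proof (intro exI allI impI ballI)
        fix n x assume "N \<le> n" "x \<in> X"
        have "dist (lam ^ r n x) (cis (2*pi*l x)) = norm (cis (2*pi*(\<alpha> * real (r n x) - l x)) - 1)"
          by (simp add: lp dist_cis algebra_simps)
        also have "\<dots> \<le> 2*pi * dist_Z (\<alpha> * real (r n x) - l x)" by (rule upper_bound)
        also have "\<dots> < e" using N \<open>N \<le> n\<close> \<open>x \<in> X\<close> by (simp add: field_simps)
        finally show "dist (lam ^ r n x) (cis (2*pi*l x)) < e" .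
      qed
    qed
  qed
qed



locale ckr_sys =
  fixes X :: "'a::metric_space set" and T :: "'a \<Rightarrow> 'a"
    and C :: "nat \<Rightarrow> nat" and h :: "nat \<Rightarrow> nat \<Rightarrow> nat" and B :: "nat \<Rightarrow> nat \<Rightarrow> 'a set"
  assumes mcs: "minimal_cantor_system X T"
    and seq: "ckr_sequence X T C h B"
begin

abbreviation "roof n \<equiv> ckr_roof C B n"
abbreviation "ret n x \<equiv> ckr_return T C B n x"

lemma cX: "compact X" "X \<noteq> {}" "\<And>x. x \<in> X \<Longrightarrow> x islimpt X"
  using mcs unfolding minimal_cantor_system_def cantor_space_def by auto

lemma clX: "closed X" using cX(1) compact_imp_closed by blast

lemma homeo: "T ` X = X" "continuous_on X T" "\<And>x. x \<in> X \<Longrightarrow> inv_into X T (T x) = x"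
  "\<And>y. y \<in> X \<Longrightarrow> T (inv_into X T y) = y" "inv_into X T ` X = X"
  using mcs unfolding minimal_cantor_system_def self_homeo_def homeomorphism_def by auto

lemma T_X: "x \<in> X \<Longrightarrow> T x \<in> X" using homeo(1) by blast

lemma minimal: "Y \<subseteq> X \<Longrightarrow> closed Y \<Longrightarrow> Y \<noteq> {} \<Longrightarrow> T ` Y = Y \<Longrightarrow> Y = X"
  using mcs unfolding minimal_cantor_system_def minimal_system_def by blast

lemma Tpow_X: "x \<in> X \<Longrightarrow> (T ^^ j) x \<in> X"
  by (induction j) (auto intro: T_X)

lemma Tpow_cont: "continuous_on X (T ^^ j)"
proof (induction j)
  case 0 thus ?case by (simp add: continuous_on_id)
next
  case (Suc j)
  have "continuous_on X (\<lambda>x. T ((T ^^ j) x))"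
    by (rule continuous_on_compose2[OF homeo(2) Suc]) (auto intro: Tpow_X)
  thus ?case by (simp add: comp_def)
qed

lemma seq_unf1: "\<forall>n. ckr_partition X T C h B n"
  using seq unfolding ckr_sequence_def by (elim conjE) assumption
lemma seq_unf5: "\<forall>n. ckr_roof C B (Suc n) \<subseteq> ckr_roof C B n"
  using seq unfolding ckr_sequence_def by (elim conjE) assumption
lemma seq_unf7: "\<exists>x. (\<Inter>n. ckr_roof C B n) = {x}"
  using seq unfolding ckr_sequence_def by (elim conjE) assumption

lemma part: "ckr_partition X T C h B n" using seq_unf1 by blast

lemma part_unf2: "\<forall>k\<in>{1..C n}. B n k \<subseteq> X \<and> B n k \<noteq> {} \<and> openin (top_of_set X) (B n k)
        \<and> closedin (top_of_set X) (B n k) \<and> 1 \<le> h n k"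
  using part[of n] unfolding ckr_partition_def by (elim conjE) assumption
lemma part_unf3: "\<forall>p\<in>ckr_index C h n. \<forall>q\<in>ckr_index C h n. p \<noteq> q \<longrightarrow> ckr_atom X T B n p \<inter> ckr_atom X T B n q = {}"
  using part[of n] unfolding ckr_partition_def by (elim conjE) assumption
lemma part_unf4: "(\<Union>p\<in>ckr_index C h n. ckr_atom X T B n p) = X"
  using part[of n] unfolding ckr_partition_def by (elim conjE) assumption

lemma Bprops: "k \<in> {1..C n} \<Longrightarrow> B n k \<subseteq> X \<and> B n k \<noteq> {} \<and> openin (top_of_set X) (B n k)
        \<and> closedin (top_of_set X) (B n k) \<and> 1 \<le> h n k"
  using part_unf2[of n] by (rule bspec)

lemma disj: "p \<in> ckr_index C h n \<Longrightarrow> q \<in> ckr_index C h n \<Longrightarrow> p \<noteq> q \<Longrightarrow>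
   ckr_atom X T B n p \<inter> ckr_atom X T B n q = {}"
  using part_unf3[of n] by blast

lemma cover: "x \<in> X \<Longrightarrow> \<exists>p\<in>ckr_index C h n. x \<in> ckr_atom X T B n p"
  using part_unf4[of n] by blast

lemma roof_sub: "roof n \<subseteq> X"
  unfolding ckr_roof_def using Bprops by (meson UN_least)

lemma roof_closed: "closed (roof n)"
  unfolding ckr_roof_def
proof (rule closed_UN)
  show "finite {1..C n}" by simp
  show "\<forall>k\<in>{1..C n}. closed (B n k)" using Bprops closedin_closed_trans clX by blast
qed

lemma roof_Suc: "roof (Suc n) \<subseteq> roof n"
  using seq_unf5 by blast

lemma roof_mono: "m \<le> n \<Longrightarrow> roof n \<subseteq> roof m"
  using lift_Suc_antimono_le[of "ckr_roof C B", OF roof_Suc] by blast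

lemma KR3: "\<exists>x. (\<Inter>n. roof n) = {x}"
  using seq_unf7 by blast

definition "x0 = (SOME x. (\<Inter>n. roof n) = {x})"

lemma x0: "(\<Inter>n. roof n) = {x0}"
  unfolding x0_def using KR3 by (rule someI_ex)

lemma x0_X: "x0 \<in> X" using x0 roof_sub by blast

lemma roof_shrink:
  assumes "d > 0"
  shows "\<exists>N. \<forall>n\<ge>N. \<forall>y\<in>roof n. dist y x0 < d"
proof (rule ccontr)
  assume "\<not> ?thesis"
  hence A: "\<forall>N. \<exists>y\<in>roof N. dist y x0 \<ge> d"
    using roof_mono by (meson not_less subsetD)
  let ?F = "range (\<lambda>n. roof n - ball x0 d)"
  have "X \<inter> \<Inter>?F \<noteq> {}"
  proof (rule compact_imp_fip[OF cX(1)])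
    fix S assume "S \<in> ?F"
    thus "closed S" using roof_closed by auto
  next
    fix F' assume F': "finite F'" "F' \<subseteq> ?F"
    then obtain I where I: "finite I" "F' = (\<lambda>n. roof n - ball x0 d) ` I"
      by (meson finite_subset_image)
    define N where "N = Max (insert 0 I)"
    have NI: "i \<in> I \<Longrightarrow> i \<le> N" for i using I(1) by (simp add: N_def)
    obtain y where y: "y \<in> roof N" "dist y x0 \<ge> d" using A by blast
    have "y \<in> X" using y roof_sub by blast
    moreover have "y \<in> \<Inter>F'" using y NI roof_mono I(2) by (auto simp: dist_commute)
    ultimately show "X \<inter> \<Inter>F' \<noteq> {}" by blast
  qed
  then obtain z where "\<forall>n. z \<in> roof n \<and> z \<notin> ball x0 d" by blast
  hence "z \<in> (\<Inter>n. roof n)" "z \<notin> ball x0 d" by auto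
  thus False using x0 \<open>d > 0\<close> by auto
qed

lemma ex_ret:
  assumes "x \<in> X" shows "\<exists>j. (T ^^ j) x \<in> roof n"
proof -
  obtain p where p: "p \<in> ckr_index C h n" "x \<in> ckr_atom X T B n p" using cover[OF assms] by blast
  obtain k j where kj: "p = (k, j)" by (cases p)
  have "k \<in> {1..C n}" using p(1) kj unfolding ckr_index_def by auto
  moreover have "(T ^^ j) x \<in> B n k" using p(2) kj unfolding ckr_atom_def preim_pow_def by auto
  ultimately show ?thesis unfolding ckr_roof_def by blast
qed

lemma ret_in: "x \<in> X \<Longrightarrow> (T ^^ ret n x) x \<in> roof n"
  unfolding ckr_return_def using ex_ret by (rule LeastI_ex)

lemma ret_le: "(T ^^ j) x \<in> roof n \<Longrightarrow> ret n x \<le> j"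
  unfolding ckr_return_def by (rule Least_le)

lemma ret_step:
  assumes x: "x \<in> X" and nr: "x \<notin> roof n"
  shows "ret n x = Suc (ret n (T x))"
proof -
  have r: "(T ^^ ret n x) x \<in> roof n" by (rule ret_in[OF x])
  then obtain i where i: "ret n x = Suc i" using nr by (cases "ret n x") auto
  have "(T ^^ i) (T x) \<in> roof n" using r i by (simp add: funpow_swap1)
  hence "ret n (T x) \<le> i" by (rule ret_le)
  moreover have "(T ^^ Suc (ret n (T x))) x \<in> roof n"
    using ret_in[OF T_X[OF x], of n] by (simp only: funpow_Suc_right comp_def)
  hence "ret n x \<le> Suc (ret n (T x))" by (rule ret_le)
  ultimately show ?thesis using i by simp
qed

lemma ret_atom:
  assumes p: "(k, j) \<in> ckr_index C h n" and x: "x \<in> ckr_atom X T B n (k, j)"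
  shows "ret n x = j"
proof -
  have xX: "x \<in> X" and xB: "(T ^^ j) x \<in> B n k"
    using x unfolding ckr_atom_def preim_pow_def by auto
  have k: "k \<in> {1..C n}" "j < h n k" using p unfolding ckr_index_def by auto
  have "(T ^^ j) x \<in> roof n" using xB k unfolding ckr_roof_def by blast
  hence le: "ret n x \<le> j" by (rule ret_le)
  show ?thesis
  proof (rule ccontr)
    assume "ret n x \<noteq> j"
    hence lt: "ret n x < j" using le by simp
    define i where "i = ret n x"
    define y where "y = (T ^^ i) x"
    have yX: "y \<in> X" using Tpow_X[OF xX] by (simp add: y_def)
    have "y \<in> roof n" using ret_in[OF xX, of n] by (simp add: y_def i_def)
    then obtain l where l: "l \<in> {1..C n}" "y \<in> B n l" unfolding ckr_roof_def by blast
    have p1: "(l, 0) \<in> ckr_index C h n" using l Bprops[OF l(1)] unfolding ckr_index_def by auto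
    have p2: "(k, j - i) \<in> ckr_index C h n" using k lt unfolding ckr_index_def i_def by auto
    have y1: "y \<in> ckr_atom X T B n (l, 0)" using yX l unfolding ckr_atom_def preim_pow_def by simp
    have "(T ^^ (j - i)) y = (T ^^ (j - i + i)) x"
      by (simp add: y_def funpow_add)
    also have "j - i + i = j" using lt i_def by simp
    finally have "(T ^^ (j - i)) y = (T ^^ j) x" .
    hence y2: "y \<in> ckr_atom X T B n (k, j - i)" using yX xB unfolding ckr_atom_def preim_pow_def by simp
    have "(l, 0) \<noteq> (k, j - i)" using lt i_def by auto
    from disj[OF p1 p2 this] y1 y2 show False by blast
  qed
qed

lemma atom_openin:
  assumes "(k, j) \<in> ckr_index C h n"
  shows "openin (top_of_set X) (ckr_atom X T B n (k, j))"
proof -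
  have k: "k \<in> {1..C n}" using assms unfolding ckr_index_def by auto
  have "openin (top_of_set X) (X \<inter> (T ^^ j) -` B n k)"
  proof (rule continuous_openin_preimage[of X "T ^^ j" X "B n k", OF Tpow_cont])
    show "T ^^ j \<in> X \<rightarrow> X" using Tpow_X by (rule Pi_I)
    show "openin (top_of_set X) (B n k)" using Bprops[OF k] by blast
  qed
  moreover have "X \<inter> (T ^^ j) -` B n k = ckr_atom X T B n (k, j)"
    unfolding ckr_atom_def preim_pow_def by auto
  ultimately show ?thesis by simp
qed

lemma locally_const_cont:
  fixes f :: "'a \<Rightarrow> 'b::metric_space"
  assumes "\<And>x. x \<in> X \<Longrightarrow> \<exists>U. openin (top_of_set X) U \<and> x \<in> U \<and> (\<forall>y\<in>U. f y = f x)"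
  shows "continuous_on X f"
  unfolding continuous_on_iff
proof (intro ballI allI impI)
  fix x and e :: real assume x: "x \<in> X" and e: "e > 0"
  obtain U where U: "openin (top_of_set X) U" "x \<in> U" "\<forall>y\<in>U. f y = f x" using assms[OF x] by blast
  then obtain d where d: "d > 0" "\<forall>x'\<in>X. dist x' x < d \<longrightarrow> x' \<in> U"
    unfolding openin_euclidean_subtopology_iff by blast
  show "\<exists>d>0. \<forall>x'\<in>X. dist x' x < d \<longrightarrow> dist (f x') (f x) < e"
  proof (intro exI[of _ d] conjI ballI impI)
    show "d > 0" by (rule d(1))
    fix x' assume "x' \<in> X" "dist x' x < d"
    hence "x' \<in> U" using d(2) by blast
    thus "dist (f x') (f x) < e" using U(3) e by simp
  qed
qed

lemma ret_cont: "continuous_on X (\<lambda>x. (c::complex) ^ ret n x)"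
proof (rule locally_const_cont)
  fix x assume "x \<in> X"
  then obtain p where p0: "p \<in> ckr_index C h n" "x \<in> ckr_atom X T B n p"
    using cover by blast
  obtain k j where "p = (k, j)" by (cases p)
  with p0 have p: "(k, j) \<in> ckr_index C h n" "x \<in> ckr_atom X T B n (k, j)" by auto
  show "\<exists>U. openin (top_of_set X) U \<and> x \<in> U \<and> (\<forall>y\<in>U. c ^ ret n y = c ^ ret n x)"
  proof (intro exI[of _ "ckr_atom X T B n (k, j)"] conjI ballI)
    show "openin (top_of_set X) (ckr_atom X T B n (k, j))" by (rule atom_openin[OF p(1)])
    show "x \<in> ckr_atom X T B n (k, j)" by (rule p(2))
    fix y assume "y \<in> ckr_atom X T B n (k, j)"
    hence "ret n y = j" by (rule ret_atom[OF p(1)])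
    moreover have "ret n x = j" using p(2) by (rule ret_atom[OF p(1)])
    ultimately show "c ^ ret n y = c ^ ret n x" by simp
  qed
qed

end


context ckr_sys begin

lemma partA:
  assumes lamn: "norm lam = 1" and ev: "continuous_eigenvalue X T lam"
  shows "uniformly_convergent_on X (\<lambda>n x. lam ^ ret (Suc n) x)"
proof -
  obtain f :: "'a \<Rightarrow> complex" where fc: "continuous_on X f" and x1: "\<exists>x\<in>X. f x \<noteq> 0"
    and fe: "\<And>x. x \<in> X \<Longrightarrow> f (T x) = lam * f x"
    using ev unfolding continuous_eigenvalue_def by blast
  have nc: "continuous_on X (\<lambda>x. norm (f x))" using fc by (intro continuous_intros)
  obtain xm where xm: "xm \<in> X" "\<And>y. y \<in> X \<Longrightarrow> norm (f y) \<le> norm (f xm)"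
    using continuous_attains_sup[OF cX(1) cX(2) nc] by blast
  define M where "M = norm (f xm)"
  have M0: "M > 0" using x1 xm(2) unfolding M_def by (metis norm_le_zero_iff not_less order.trans)
  have fnT: "norm (f (T x)) = norm (f x)" if "x \<in> X" for x
    using fe[OF that] lamn by (simp add: norm_mult)
  define Y where "Y = {x \<in> X. norm (f x) = M}"
  have "Y = X"
  proof (rule minimal)
    show "Y \<subseteq> X" unfolding Y_def by blast
    show "closed Y" unfolding Y_def by (rule continuous_closed_preimage_constant[OF nc clX])
    show "Y \<noteq> {}" using xm(1) unfolding Y_def M_def by blast
    show "T ` Y = Y"
    proof
      show "T ` Y \<subseteq> Y" unfolding Y_def using fnT T_X by auto
      show "Y \<subseteq> T ` Y"
      proof
        fix y assume y: "y \<in> Y"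
        hence yX: "y \<in> X" unfolding Y_def by blast
        define z where "z = inv_into X T y"
        have zX: "z \<in> X" using homeo(5) yX unfolding z_def by blast
        have Tz: "T z = y" using homeo(4)[OF yX] unfolding z_def .
        have "norm (f z) = M" using fnT[OF zX] Tz y unfolding Y_def by simp
        thus "y \<in> T ` Y" using zX Tz unfolding Y_def by blast
      qed
    qed
  qed
  hence fM: "\<And>x. x \<in> X \<Longrightarrow> norm (f x) = M" unfolding Y_def by blast
  have fpow: "f ((T ^^ j) x) = lam ^ j * f x" if "x \<in> X" for x j
    by (induction j) (simp_all add: fe Tpow_X that)
  have uc: "uniformly_continuous_on X f" by (rule compact_uniformly_continuous[OF fc cX(1)])
  show ?thesis
    unfolding uniformly_convergent_on_def uniform_limit_iff
  proof (intro exI[of _ "\<lambda>x. f x0 / f x"] allI impI)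
    fix e :: real assume e: "e > 0"
    hence "e * M > 0" using M0 by simp
    then obtain d where d: "d > 0" "\<forall>x\<in>X. \<forall>x'\<in>X. dist x' x < d \<longrightarrow> dist (f x') (f x) < e * M"
      using uc unfolding uniformly_continuous_on_def by blast
    obtain N where N: "\<forall>n\<ge>N. \<forall>y\<in>roof n. dist y x0 < d" using roof_shrink[OF d(1)] by blast
    show "\<forall>\<^sub>F n in sequentially. \<forall>x\<in>X. dist (lam ^ ret (Suc n) x) (f x0 / f x) < e"
      unfolding eventually_sequentially
    proof (intro exI[of _ N] allI impI ballI)
      fix n x assume n: "N \<le> n" and x: "x \<in> X"
      define y where "y = (T ^^ ret (Suc n) x) x"
      have yr: "y \<in> roof (Suc n)" unfolding y_def by (rule ret_in[OF x])
      have yX: "y \<in> X" using yr roof_sub by blast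
      have "Suc n \<ge> N" using n by simp
      hence "dist y x0 < d" using N yr by blast
      hence dy: "dist (f y) (f x0) < e * M" using d(2) x0_X yX by blast
      have fx0: "f x \<noteq> 0" using fM[OF x] M0 by auto
      have "lam ^ ret (Suc n) x = f y / f x" using fpow[OF x] fx0 unfolding y_def by simp
      hence "dist (lam ^ ret (Suc n) x) (f x0 / f x) = norm (f y - f x0) / norm (f x)"
        by (simp add: dist_norm diff_divide_distrib[symmetric] norm_divide)
      also have "\<dots> = dist (f y) (f x0) / M" using fM[OF x] by (simp add: dist_norm)
      also have "\<dots> < e" using dy M0 by (simp add: divide_less_eq)
      finally show "dist (lam ^ ret (Suc n) x) (f x0 / f x) < e" .
    qed
  qed
qed

lemma partB:
  assumes lamn: "norm lam = 1"
    and uc: "uniformly_convergent_on X (\<lambda>n x. lam ^ ret (Suc n) x)"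
  shows "continuous_eigenvalue X T lam"
proof -
  obtain g where ul: "uniform_limit X (\<lambda>n x. lam ^ ret (Suc n) x) g sequentially"
    using uc unfolding uniformly_convergent_on_def by blast
  have gc: "continuous_on X g"
    by (rule uniform_limit_theorem[OF _ ul]) (simp_all add: ret_cont)
  have pt: "((\<lambda>n. lam ^ ret (Suc n) x) \<longlongrightarrow> g x) sequentially" if "x \<in> X" for x
    by (rule tendsto_uniform_limitI[OF ul that])
  have gn: "norm (g x) = 1" if x: "x \<in> X" for x
  proof -
    have "((\<lambda>n. norm (lam ^ ret (Suc n) x)) \<longlongrightarrow> norm (g x)) sequentially"
      by (rule tendsto_norm[OF pt[OF x]])
    moreover have "(\<lambda>n. norm (lam ^ ret (Suc n) x)) = (\<lambda>n. 1)" by (simp add: norm_power lamn)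
    ultimately show ?thesis using LIMSEQ_unique tendsto_const by metis
  qed
  have eq1: "g (T x) * lam = g x" if x: "x \<in> X" and xn: "x \<noteq> x0" for x
  proof -
    have "x \<notin> (\<Inter>n. roof n)" using x0 xn by blast
    then obtain m where m: "x \<notin> roof m" by blast
    have ev: "\<forall>\<^sub>F n in sequentially. lam ^ ret (Suc n) (T x) * lam = lam ^ ret (Suc n) x"
      unfolding eventually_sequentially
    proof (intro exI[of _ m] allI impI)
      fix n assume "m \<le> n"
      hence "x \<notin> roof (Suc n)" using m roof_mono[of m "Suc n"] by auto
      hence "ret (Suc n) x = Suc (ret (Suc n) (T x))" by (rule ret_step[OF x])
      thus "lam ^ ret (Suc n) (T x) * lam = lam ^ ret (Suc n) x" by (simp add: mult.commute)
    qed
    have "((\<lambda>n. lam ^ ret (Suc n) (T x) * lam) \<longlongrightarrow> g (T x) * lam) sequentially"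
      by (intro tendsto_mult_right pt T_X x)
    hence "((\<lambda>n. lam ^ ret (Suc n) x) \<longlongrightarrow> g (T x) * lam) sequentially"
      by (rule Lim_transform_eventually[OF _ ev])
    thus ?thesis using pt[OF x] LIMSEQ_unique by blast
  qed
  define hh where "hh x = g (T x) * lam - g x" for x
  have hc: "continuous_on X hh" unfolding hh_def
    by (intro continuous_intros continuous_on_compose2[OF gc homeo(2)] gc) (use T_X in auto)
  have eq: "g (T x) * lam = g x" if x: "x \<in> X" for x
  proof (cases "x = x0")
    case False thus ?thesis using eq1 x by blast
  next
    case True
    obtain s where s: "\<forall>n. s n \<in> X - {x0}" "(s \<longlongrightarrow> x0) sequentially"
      using cX(3)[OF x0_X] unfolding islimpt_sequential by blast
    have "((\<lambda>n. hh (s n)) \<longlongrightarrow> hh x0) sequentially"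
      by (rule continuous_on_tendsto_compose[OF hc s(2) x0_X]) (use s(1) in auto)
    moreover have "(\<lambda>n. hh (s n)) = (\<lambda>n. 0)" using s(1) eq1 unfolding hh_def by auto
    ultimately have "hh x0 = 0" using LIMSEQ_unique tendsto_const by metis
    thus ?thesis using True unfolding hh_def by simp
  qed
  have g0: "g x \<noteq> 0" if "x \<in> X" for x using gn[OF that] by auto
  show ?thesis unfolding continuous_eigenvalue_def
  proof (intro exI[of _ "\<lambda>x. inverse (g x)"] conjI ballI)
    show "continuous_on X (\<lambda>x. inverse (g x))" using gc g0 by (intro continuous_on_inverse) auto
    obtain x where "x \<in> X" using cX(2) by blast
    thus "\<exists>x\<in>X. inverse (g x) \<noteq> 0" using g0 by auto
  next
    fix x assume x: "x \<in> X"
    have "lam \<noteq> 0" using lamn by auto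
    thus "inverse (g (T x)) = lam * inverse (g x)"
      using eq[OF x] g0[OF x] g0[OF T_X[OF x]] by (auto simp: field_simps)
  qed
qed

end

theorem mainTheorem8:
  fixes X :: "'a::metric_space set" and T :: "'a \<Rightarrow> 'a"
    and C :: "nat \<Rightarrow> nat" and h :: "nat \<Rightarrow> nat \<Rightarrow> nat" and B :: "nat \<Rightarrow> nat \<Rightarrow> 'a set"
    and \<alpha> :: real and lam :: complex
  assumes "minimal_cantor_system X T"
    and "ckr_sequence X T C h B"
    and "lam = exp (2 * complex_of_real pi * \<i> * complex_of_real \<alpha>)"
  shows "(continuous_eigenvalue X T lam \<longleftrightarrow>
           uniformly_convergent_on X (\<lambda>n x. lam ^ ckr_return T C B (Suc n) x))
       \<and> (uniformly_convergent_on X (\<lambda>n x. lam ^ ckr_return T C B (Suc n) x) \<longleftrightarrow>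
           unif_conv_mod_Z X (\<lambda>n x. \<alpha> * real (ckr_return T C B (Suc n) x)))"
proof -
  interpret ckr_sys X T C h B using assms(1,2) by unfold_locales
  have lamn: "norm lam = 1" using assms(3) E_cis by simp
  show ?thesis
    using partA[OF lamn] partB[OF lamn] partC[where X=X and r="\<lambda>n x. ckr_return T C B (Suc n) x", OF assms(3)] by blast
qed

end
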